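(* Let $m,n$ be positive integers and let $r_1,\dots,r_k$ and $s_1,\dots,s_k$ be positive integers with $\sum_{i=1}^k r_i=m$ and $\sum_{i=1}^k s_i=n$. Put $a_0=0$ and $a_p=\sum_{i=1}^p(nr_i-ms_i)$ for $p\in[k-1]$. Let $\Lambda=(a'_1,\dots,a'_n|b'_1,\dots,b'_m)\in\mathbb Z^{n|m}$ where $(b'_1,\dots,b'_m)$ is the concatenation, for $i=1,\dots,k$, of the blocks $(a_{i-1},a_{i-1}+n,a_{i-1}+2n,\dots,a_{i-1}+(r_i-1)n)$, and $(a'_1,\dots,a'_n)$ is the concatenation, for $i=1,\dots,k-1$, of the blocks $(a_i+(s_i-1)m,\dots,a_i+m,a_i)$, followed by the block $((s_k-1)m,\dots,m,0)$. Then $\Lambda$ lies in the orbit of $\Lambda_0=(m(n-1),\dots,m,0\,|\,0,n,\dots,n(m-1))$ under the Weyl groupoid action on $\mathbb Z^{n|m}$.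
   Context: Elements of $\mathbb Z^{n|m}$ are written $\Lambda=(a_1,\dots,a_n|b_1,\dots,b_m)$, identified with $\sum_ia_i\epsilon_i-\sum_jb_j\delta_j$. The Weyl groupoid action (Sergeev–Veselov action with parameter $-n/m$) is generated by: the group $S_n\times S_m$ permuting $a_1,\dots,a_n$ among themselves and $b_1,\dots,b_m$ among themselves; and, for each $\alpha=\epsilon_i-\delta_j$, the bijection $\tau_\alpha:\Pi_\alpha\to\Pi_{-\alpha}$, $\Lambda\mapsto\Lambda+n\epsilon_i-m\delta_j$ (adding $n$ to $a_i$ and $m$ to $b_j$) and its inverse $\tau_{-\alpha}$, where $\Pi_\alpha=\{a_i=b_j\}$ and $\Pi_{-\alpha}=\{a_i-b_j=n-m\}$. The orbit of $\Lambda_0$ is the set of elements reachable from $\Lambda_0$ by finite sequences of such permutations and maps $\tau_{\pm\alpha}$ (each applied on its domain). *)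

theory Defs
  imports Main "HOL-Library.Multiset"
begin

text \<open>Elements of Z^{n|m} are pairs (a, b) of integer lists with length a = n and
length b = m, standing for (a_1,...,a_n | b_1,...,b_m).  Indices are 0-based.\<close>

type_synonym superweight = "int list \<times> int list"

text \<open>One generating step of the Weyl groupoid action (parameter -n/m) on Z^{n|m}:
a permutation in S_n x S_m, or tau_alpha (alpha = eps_i - delta_j) applied on its
domain a_i = b_j, or its inverse tau_{-alpha} applied on its domain a_i - b_j = n - m.\<close>

inductive weyl_step :: "nat \<Rightarrow> nat \<Rightarrow> superweight \<Rightarrow> superweight \<Rightarrow> bool"
  for n m :: nat where
  perm: "length a = n \<Longrightarrow> length b = m \<Longrightarrow> mset a' = mset a \<Longrightarrow> mset b' = mset b
         \<Longrightarrow> weyl_step n m (a, b) (a', b')"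
| tau_pos: "length a = n \<Longrightarrow> length b = m \<Longrightarrow> i < n \<Longrightarrow> j < m \<Longrightarrow> a ! i = b ! j
         \<Longrightarrow> weyl_step n m (a, b) (a[i := a ! i + int n], b[j := b ! j + int m])"
| tau_neg: "length a = n \<Longrightarrow> length b = m \<Longrightarrow> i < n \<Longrightarrow> j < m
         \<Longrightarrow> a ! i - b ! j = int n - int m
         \<Longrightarrow> weyl_step n m (a, b) (a[i := a ! i - int n], b[j := b ! j - int m])"

definition weyl_orbit :: "nat \<Rightarrow> nat \<Rightarrow> superweight \<Rightarrow> superweight set" where
  "weyl_orbit n m \<Lambda>0 = {\<Lambda>. (weyl_step n m)\<^sup>*\<^sup>* \<Lambda>0 \<Lambda>}"

definition Lambda0 :: "nat \<Rightarrow> nat \<Rightarrow> superweight" where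
  "Lambda0 n m = (map (\<lambda>t. int m * int t) (rev [0..<n]), map (\<lambda>t. int n * int t) [0..<m])"

text \<open>a_p = sum_{i=1}^p (n r_i - m s_i); with 0-based lists rs, ss this is the sum over i < p.\<close>
definition apos :: "nat \<Rightarrow> nat \<Rightarrow> nat list \<Rightarrow> nat list \<Rightarrow> nat \<Rightarrow> int" where
  "apos n m rs ss p = (\<Sum>i<p. int n * int (rs ! i) - int m * int (ss ! i))"

definition Lambda_rs :: "nat \<Rightarrow> nat \<Rightarrow> nat list \<Rightarrow> nat list \<Rightarrow> superweight" where
  "Lambda_rs n m rs ss =
    (let k = length rs in
     (concat (map (\<lambda>i. map (\<lambda>t. apos n m rs ss (i + 1) + int t * int m) (rev [0..<ss ! i]))
                  [0..<k - 1])
        @ map (\<lambda>t. int t * int m) (rev [0..<ss ! (k - 1)]),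
      concat (map (\<lambda>i. map (\<lambda>t. apos n m rs ss i + int t * int n) [0..<rs ! i]) [0..<k])))"

end

theory Submission
  imports Defs
begin

definition st :: "nat \<Rightarrow> nat \<Rightarrow> (nat \<Rightarrow> int) \<Rightarrow> (nat \<Rightarrow> int) \<Rightarrow> superweight" where
  "st n m al be = (map al [0..<n], map be [0..<m])"

lemma map_upt_upd: "i < n \<Longrightarrow> (map f [0..<n])[i := v] = map (f(i := v)) [0..<n]"
  by (rule nth_equalityI) auto

lemma row:
  assumes "P < n" "F \<le> m" "al P = (int n - 1 - int P) * int m"
    "\<forall>j. F \<le> j \<and> j < m \<longrightarrow> be j = int j * int n - int m * int P"
  shows "(weyl_step n m)\<^sup>*\<^sup>* (st n m al be)
     (st n m (al(P := al P - int n * int (m - F))) (\<lambda>j. if F \<le> j then be j - int m else be j))"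
  using assms
proof (induction "m - F" arbitrary: F)
  case 0
  then have "F = m" by simp
  then have "st n m (al(P := al P - int n * int (m - F))) (\<lambda>j. if F \<le> j then be j - int m else be j)
     = st n m al be" by (auto simp: st_def)
  then show ?case by (metis rtranclp.rtrancl_refl)
next
  case (Suc d)
  then have Fm: "F < m" by simp
  have IH: "(weyl_step n m)\<^sup>*\<^sup>* (st n m al be)
     (st n m (al(P := al P - int n * int (m - Suc F))) (\<lambda>j. if Suc F \<le> j then be j - int m else be j))"
    using Suc.prems Suc.hyps(2) by (intro Suc.hyps(1)) auto
  define al1 where "al1 = al(P := al P - int n * int (m - Suc F))"
  define be1 where "be1 = (\<lambda>j. if Suc F \<le> j then be j - int m else be j)"
  have "weyl_step n m (map al1 [0..<n], map be1 [0..<m])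
     ((map al1 [0..<n])[P := map al1 [0..<n] ! P - int n], (map be1 [0..<m])[F := map be1 [0..<m] ! F - int m])"
  proof (rule weyl_step.tau_neg)
    have "al1 P = (int n - 1 - int P) * int m - int n * (int m - int F - 1)"
      using Suc.prems Fm by (simp add: al1_def of_nat_diff)
    moreover have "be1 F = int F * int n - int m * int P" using Suc.prems Fm by (simp add: be1_def)
    ultimately show "map al1 [0..<n] ! P - map be1 [0..<m] ! F = int n - int m"
      using Suc.prems Fm by (simp add: algebra_simps)
  qed (use Suc.prems Fm in auto)
  moreover have "(map al1 [0..<n])[P := map al1 [0..<n] ! P - int n] =
     map (al(P := al P - int n * int (m - F))) [0..<n]"
    using Suc.prems Fm by (simp add: map_upt_upd al1_def of_nat_diff algebra_simps)
  moreover have "(map be1 [0..<m])[F := map be1 [0..<m] ! F - int m] =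
     map (\<lambda>j. if F \<le> j then be j - int m else be j) [0..<m]"
    using Fm by (intro nth_equalityI) (auto simp: be1_def nth_list_update)
  ultimately have "weyl_step n m (st n m al1 be1)
     (st n m (al(P := al P - int n * int (m - F))) (\<lambda>j. if F \<le> j then be j - int m else be j))"
    by (simp add: st_def)
  with IH show ?case unfolding al1_def be1_def by simp
qed

lemma block:
  assumes "P + s \<le> n" "F \<le> m"
    "\<forall>p. P \<le> p \<and> p < P + s \<longrightarrow> al p = (int n - 1 - int p) * int m"
    "\<forall>j. F \<le> j \<and> j < m \<longrightarrow> be j = int j * int n - int m * int P"
  shows "(weyl_step n m)\<^sup>*\<^sup>* (st n m al be)
     (st n m (\<lambda>p. if P \<le> p \<and> p < P + s then (int n - 1 - int p) * int m - int n * int (m - F) else al p)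
             (\<lambda>j. if F \<le> j then be j - int m * int s else be j))"
  using assms
proof (induction s arbitrary: P al be)
  case 0
  have "(\<lambda>p. if P \<le> p \<and> p < P + 0 then (int n - 1 - int p) * int m - int n * int (m - F) else al p) = al"
    by auto
  moreover have "(\<lambda>j. if F \<le> j then be j - int m * int 0 else be j) = be" by auto
  ultimately show ?case by simp
next
  case (Suc s)
  define al1 where "al1 = al(P := al P - int n * int (m - F))"
  define be1 where "be1 = (\<lambda>j. if F \<le> j then be j - int m else be j)"
  have R: "(weyl_step n m)\<^sup>*\<^sup>* (st n m al be) (st n m al1 be1)"
    unfolding al1_def be1_def using Suc.prems by (intro row) auto
  have I: "(weyl_step n m)\<^sup>*\<^sup>* (st n m al1 be1)
     (st n m (\<lambda>p. if Suc P \<le> p \<and> p < Suc P + s then (int n - 1 - int p) * int m - int n * int (m - F) else al1 p)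
             (\<lambda>j. if F \<le> j then be1 j - int m * int s else be1 j))"
    using Suc.prems by (intro Suc.IH) (auto simp: al1_def be1_def algebra_simps)
  have "(\<lambda>p. if Suc P \<le> p \<and> p < Suc P + s then (int n - 1 - int p) * int m - int n * int (m - F) else al1 p)
    = (\<lambda>p. if P \<le> p \<and> p < P + Suc s then (int n - 1 - int p) * int m - int n * int (m - F) else al p)"
    using Suc.prems by (auto simp: al1_def)
  moreover have "(\<lambda>j. if F \<le> j then be1 j - int m * int s else be1 j)
     = (\<lambda>j. if F \<le> j then be j - int m * int (Suc s) else be j)"
    by (auto simp: be1_def algebra_simps)
  ultimately show ?case using R I by simp
qed


definition SS :: "nat list \<Rightarrow> nat \<Rightarrow> nat" where
  "SS xs i = sum_list (take i xs)"

lemma SS_0[simp]: "SS xs 0 = 0" by (simp add: SS_def)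

lemma SS_Suc: "i < length xs \<Longrightarrow> SS xs (Suc i) = SS xs i + xs ! i"
  by (simp add: SS_def take_Suc_conv_app_nth)

lemma SS_le: "SS xs i \<le> sum_list xs"
proof -
  have "sum_list xs = sum_list (take i xs) + sum_list (drop i xs)"
    by (metis append_take_drop_id sum_list_append)
  then show ?thesis by (simp add: SS_def)
qed

lemma SS_len: "SS xs (length xs) = sum_list xs" by (simp add: SS_def)

lemma apos_SS:
  assumes "length ss = length rs" "i \<le> length rs"
  shows "apos n m rs ss i = int n * int (SS rs i) - int m * int (SS ss i)"
  using assms(2)
proof (induction i)
  case 0
  then show ?case by (simp add: apos_def)
next
  case (Suc i)
  have "apos n m rs ss (Suc i) = apos n m rs ss i + (int n * int (rs ! i) - int m * int (ss ! i))"
    by (simp add: apos_def)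
  then show ?case using Suc assms(1) by (simp add: SS_Suc algebra_simps)
qed

definition Ablk :: "nat \<Rightarrow> nat \<Rightarrow> nat list \<Rightarrow> nat list \<Rightarrow> nat \<Rightarrow> int list" where
  "Ablk n m rs ss i = map (\<lambda>t. apos n m rs ss (i + 1) + int t * int m) (rev [0..<ss ! i])"

definition Bblk :: "nat \<Rightarrow> nat \<Rightarrow> nat list \<Rightarrow> nat list \<Rightarrow> nat \<Rightarrow> int list" where
  "Bblk n m rs ss i = map (\<lambda>t. apos n m rs ss i + int t * int n) [0..<rs ! i]"

definition LL :: "nat \<Rightarrow> nat \<Rightarrow> nat list \<Rightarrow> nat list \<Rightarrow> nat \<Rightarrow> superweight" where
  "LL n m rs ss i =
    (concat (map (Ablk n m rs ss) [0..<i]) @ map (\<lambda>p. (int n - 1 - int p) * int m) [SS ss i..<n],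
     concat (map (Bblk n m rs ss) [0..<i]) @ map (\<lambda>j. int j * int n - int m * int (SS ss i)) [SS rs i..<m])"

lemma len_A: "i \<le> length ss \<Longrightarrow> length (concat (map (Ablk n m rs ss) [0..<i])) = SS ss i"
  by (induction i) (auto simp: Ablk_def SS_Suc)

lemma len_B: "i \<le> length rs \<Longrightarrow> length (concat (map (Bblk n m rs ss) [0..<i])) = SS rs i"
  by (induction i) (auto simp: Bblk_def SS_Suc)

lemma step:
  assumes "length ss = length rs" "sum_list rs = m" "sum_list ss = n" "i < length rs"
  shows "(weyl_step n m)\<^sup>*\<^sup>* (LL n m rs ss i) (LL n m rs ss (Suc i))"
proof -
  obtain A B where AB: "LL n m rs ss i = (A, B)" by fastforce
  define P where "P = SS ss i"
  define F where "F = SS rs (Suc i)"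
  define F0 where "F0 = SS rs i"
  define s where "s = ss ! i"
  have SSs: "SS ss (Suc i) = P + s" using assms by (simp add: SS_Suc P_def s_def)
  have SSr: "F = F0 + rs ! i" using assms by (simp add: SS_Suc F_def F0_def)
  have Pn: "P + s \<le> n" using SS_le[of ss "Suc i"] assms SSs by simp
  have Fm: "F \<le> m" using SS_le[of rs "Suc i"] assms by (simp add: F_def)
  have lA: "length (concat (map (Ablk n m rs ss) [0..<i])) = P"
    using len_A[of i ss] assms by (simp add: P_def)
  have lB: "length (concat (map (Bblk n m rs ss) [0..<i])) = F0"
    using len_B[of i rs] assms by (simp add: F0_def)
  have A: "A = concat (map (Ablk n m rs ss) [0..<i]) @ map (\<lambda>p. (int n - 1 - int p) * int m) [P..<n]"
    using AB by (simp add: LL_def P_def)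
  have B: "B = concat (map (Bblk n m rs ss) [0..<i]) @ map (\<lambda>j. int j * int n - int m * int P) [F0..<m]"
    using AB by (simp add: LL_def P_def F0_def)
  have lenA: "length A = n" using A lA Pn by simp
  have lenB: "length B = m" using B lB Fm SSr by simp
  have st0: "LL n m rs ss i = st n m (nth A) (nth B)"
    using AB lenA lenB map_nth[of A] map_nth[of B] by (simp add: st_def)
  have blk: "(weyl_step n m)\<^sup>*\<^sup>* (st n m (nth A) (nth B))
     (st n m (\<lambda>p. if P \<le> p \<and> p < P + s then (int n - 1 - int p) * int m - int n * int (m - F) else A ! p)
             (\<lambda>j. if F \<le> j then B ! j - int m * int s else B ! j))"
  proof (rule block[OF Pn Fm])
    show "\<forall>p. P \<le> p \<and> p < P + s \<longrightarrow> A ! p = (int n - 1 - int p) * int m"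
      using A lA Pn by (auto simp: nth_append)
    show "\<forall>j. F \<le> j \<and> j < m \<longrightarrow> B ! j = int j * int n - int m * int P"
      using B lB SSr by (auto simp: nth_append)
  qed
  have apos1: "apos n m rs ss (i + 1) = int n * int F - int m * int (P + s)"
    using apos_SS[of ss rs "Suc i" n m] assms SSs by (simp add: F_def)
  have apos0: "apos n m rs ss i = int n * int F0 - int m * int P"
    using apos_SS[of ss rs i n m] assms by (simp add: F0_def P_def)
  have eqA: "map (\<lambda>p. if P \<le> p \<and> p < P + s then (int n - 1 - int p) * int m - int n * int (m - F) else A ! p) [0..<n]
     = fst (LL n m rs ss (Suc i))"
  proof (rule nth_equalityI)
    show "length (map (\<lambda>p. if P \<le> p \<and> p < P + s then (int n - 1 - int p) * int m - int n * int (m - F) else A ! p) [0..<n])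
      = length (fst (LL n m rs ss (Suc i)))"
      using lA Pn SSs by (simp add: LL_def Ablk_def s_def)
    fix p assume "p < length (map (\<lambda>p. if P \<le> p \<and> p < P + s then (int n - 1 - int p) * int m - int n * int (m - F) else A ! p) [0..<n])"
    then have pn: "p < n" by simp
    show "map (\<lambda>p. if P \<le> p \<and> p < P + s then (int n - 1 - int p) * int m - int n * int (m - F) else A ! p) [0..<n] ! p
      = fst (LL n m rs ss (Suc i)) ! p"
    proof (cases "p < P")
      case True
      then show ?thesis using pn A lA by (simp add: LL_def nth_append)
    next
      case False
      note F1 = False
      show ?thesis
      proof (cases "p < P + s")
        case True
        have lt: "p - P < ss ! i" using True F1 s_def by simp
        then have "fst (LL n m rs ss (Suc i)) ! p = Ablk n m rs ss i ! (p - P)"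
          using True F1 lA by (simp add: LL_def nth_append Ablk_def s_def)
        also have "\<dots> = apos n m rs ss (i + 1) + int (P + s - 1 - p) * int m"
          using True F1 lt by (simp add: Ablk_def s_def rev_nth)
        finally show ?thesis using True F1 pn Fm apos1
          by (simp add: of_nat_diff algebra_simps)
      next
        case False
        then have "\<not> p - P < ss ! i" using s_def by simp
        then show ?thesis using False F1 pn A lA SSs
          by (simp add: LL_def nth_append Ablk_def s_def)
      qed
    qed
  qed
  have eqB: "map (\<lambda>j. if F \<le> j then B ! j - int m * int s else B ! j) [0..<m]
     = snd (LL n m rs ss (Suc i))"
  proof (rule nth_equalityI)
    show "length (map (\<lambda>j. if F \<le> j then B ! j - int m * int s else B ! j) [0..<m])
      = length (snd (LL n m rs ss (Suc i)))"
      using lB Fm SSr by (simp add: LL_def Bblk_def F_def)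
    fix j assume "j < length (map (\<lambda>j. if F \<le> j then B ! j - int m * int s else B ! j) [0..<m])"
    then have jm: "j < m" by simp
    show "map (\<lambda>j. if F \<le> j then B ! j - int m * int s else B ! j) [0..<m] ! j
      = snd (LL n m rs ss (Suc i)) ! j"
    proof (cases "j < F0")
      case True
      then show ?thesis using jm B lB SSr by (simp add: LL_def nth_append)
    next
      case False
      note F1 = False
      show ?thesis
      proof (cases "j < F")
        case True
        have ltb: "j - F0 < rs ! i" using True F1 SSr by simp
        have "snd (LL n m rs ss (Suc i)) ! j = Bblk n m rs ss i ! (j - F0)"
          using True F1 lB SSr ltb by (simp add: LL_def nth_append Bblk_def)
        also have "\<dots> = apos n m rs ss i + int (j - F0) * int n"
          using True F1 SSr ltb by (simp add: Bblk_def)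
        finally have e1: "snd (LL n m rs ss (Suc i)) ! j = apos n m rs ss i + int (j - F0) * int n" .
        have e2: "B ! j = int j * int n - int m * int P"
          using F1 jm B lB by (simp add: nth_append)
        have e3: "int (j - F0) = int j - int F0" using F1 by simp
        have "snd (LL n m rs ss (Suc i)) ! j = B ! j"
          unfolding e1 e2 e3 apos0 by (simp add: algebra_simps)
        then show ?thesis using True jm by simp
      next
        case False
        then have "\<not> j - F0 < rs ! i" using SSr by simp
        then show ?thesis using False F1 jm B lB SSr SSs
          by (simp add: LL_def nth_append Bblk_def F_def algebra_simps)
      qed
    qed
  qed
  have fin: "st n m (\<lambda>p. if P \<le> p \<and> p < P + s then (int n - 1 - int p) * int m - int n * int (m - F) else A ! p)
             (\<lambda>j. if F \<le> j then B ! j - int m * int s else B ! j) = LL n m rs ss (Suc i)"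
    unfolding st_def eqA eqB by simp
  show ?thesis using blk unfolding st0 fin .
qed

theorem proposition6p2:
  fixes m n :: nat and rs ss :: "nat list"
  assumes "0 < m" and "0 < n"
    and "length ss = length rs"
    and "\<forall>x \<in> set rs. 0 < x" and "\<forall>x \<in> set ss. 0 < x"
    and "sum_list rs = m" and "sum_list ss = n"
  shows "Lambda_rs n m rs ss \<in> weyl_orbit n m (Lambda0 n m)"
proof -
  define k where "k = length rs"
  have k0: "k > 0" using assms(1,6) k_def by (cases rs) auto
  have reach: "i \<le> k \<Longrightarrow> (weyl_step n m)\<^sup>*\<^sup>* (LL n m rs ss 0) (LL n m rs ss i)" for i
  proof (induction i)
    case 0 then show ?case by simp
  next
    case (Suc i)
    then show ?case using step[OF assms(3,6,7), of i] k_def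
      by (meson Suc_leD Suc_le_lessD rtranclp_trans)
  qed
  have L0: "LL n m rs ss 0 = Lambda0 n m"
    by (auto simp: LL_def Lambda0_def rev_map[symmetric] intro!: nth_equalityI simp: rev_nth of_nat_diff algebra_simps)
  have aposk: "apos n m rs ss k = 0"
    using apos_SS[of ss rs k n m] assms k_def SS_len[of ss] SS_len[of rs] by simp
  have Lk: "LL n m rs ss k = Lambda_rs n m rs ss"
  proof -
    have ups: "[0..<k] = [0..<k-1] @ [k-1]" using k0
      by (metis Suc_diff_1 upt_Suc_append zero_le)
    have "SS ss k = n" "SS rs k = m" using assms k_def SS_len[of ss] SS_len[of rs] by simp_all
    moreover have "Ablk n m rs ss (k - 1) = map (\<lambda>t. int t * int m) (rev [0..<ss ! (k - 1)])"
      using aposk k0 by (simp add: Ablk_def)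
    ultimately show ?thesis using ups
      by (simp add: LL_def Lambda_rs_def Let_def k_def[symmetric] Bblk_def[abs_def] Ablk_def[abs_def])
  qed
  show ?thesis using reach[of k] L0 Lk by (simp add: weyl_orbit_def)
qed

end
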